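(* Let $f:\mathbb{R}\to\mathbb{R}$ be integrable with respect to every Gaussian measure on $\mathbb{R}$. Let $x\in\Lambda$ and $P_x(\phi)=\phi_x$. Then for all $\rho>0$ and $m\in(-\sqrt\rho,\sqrt\rho)$, \[ \langle f\circ P_x\rangle_{\mathrm{MC}}^{m,\rho;N}=O(1)\quad(N\to\infty). \]
   Context: $\Lambda$ is a finite lattice with $N=|\Lambda|$ sites, fields $\phi\in\mathbb{R}^\Lambda$. $\mu_{\mathrm{MC}}^{m,\rho;N}$ is the normalized uniform surface measure on the $(N-2)$-sphere $\{\sum_x\phi_x=mN,\ \sum_x\phi_x^2=\rho N\}$. *)

theory Defs
  imports "HOL-Probability.Probability" "HOL-Library.Landau_Symbols"
begin

definition gaussian_measure :: "real \<Rightarrow> real \<Rightarrow> real measure" where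
  "gaussian_measure mu sd = density lborel (normal_density mu sd)"

definition std_gauss_field :: "'a set \<Rightarrow> ('a \<Rightarrow> real) measure" where
  "std_gauss_field Lam = PiM Lam (\<lambda>_. gaussian_measure 0 1)"

text \<open>Microcanonical measure: normalized uniform surface measure on the (N-2)-sphere
  {phi. sum phi = m N, sum phi^2 = rho N}, N = card Lam.  It is realized as the law of
  c + r (g - mean g)/|g - mean g| for a standard Gaussian field g, where c = (m,...,m) is the
  centre and r = sqrt (N (rho - m^2)) the radius of the sphere (rotation invariance of the
  Gaussian within the hyperplane orthogonal to (1,...,1)).\<close>
definition mc_measure :: "'a set \<Rightarrow> real \<Rightarrow> real \<Rightarrow> ('a \<Rightarrow> real) measure" where
  "mc_measure Lam m rho =
     distr (std_gauss_field Lam) (PiM Lam (\<lambda>_. borel))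
       (\<lambda>g. let N = real (card Lam);
                a = (\<Sum>y\<in>Lam. g y) / N;
                s = sqrt (\<Sum>y\<in>Lam. (g y - a)\<^sup>2)
            in (\<lambda>y\<in>Lam. m + sqrt (N * (rho - m\<^sup>2)) * (g y - a) / s))"

end

theory Submission
  imports Defs
begin
lemma gauss_formula:
  fixes a b :: real assumes a: "a > 0"
  shows "(\<integral>\<^sup>+t. ennreal (exp (b * t - a * t\<^sup>2 / 2)) \<partial>lborel)
       = ennreal (sqrt (2 * pi / a) * exp (b\<^sup>2 / (2 * a)))"
proof -
  have eq: "exp (b * t - a * t\<^sup>2 / 2) = sqrt (2 * pi / a) * exp (b\<^sup>2 / (2 * a)) * normal_density (b / a) (1 / sqrt a) t" for t
  proof -
    have s: "(1 / sqrt a)\<^sup>2 = 1 / a" using a by (simp add: power_divide)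
    have "normal_density (b / a) (1 / sqrt a) t = 1 / sqrt (2 * pi / a) * exp (- (t - b / a)\<^sup>2 / (2 / a))"
      unfolding normal_density_def s by simp
    moreover have "- (t - b / a)\<^sup>2 / (2 / a) = b * t - a * t\<^sup>2 / 2 - b\<^sup>2 / (2 * a)"
      using a by (simp add: field_simps power2_eq_square)
    ultimately have "normal_density (b / a) (1 / sqrt a) t = 1 / sqrt (2 * pi / a) * (exp (b * t - a * t\<^sup>2 / 2) / exp (b\<^sup>2 / (2 * a)))"
      by (simp add: exp_diff)
    then show ?thesis using a by (simp add: field_simps)
  qed
  have "(\<integral>\<^sup>+t. ennreal (exp (b * t - a * t\<^sup>2 / 2)) \<partial>lborel)
      = (\<integral>\<^sup>+t. ennreal (sqrt (2 * pi / a) * exp (b\<^sup>2 / (2 * a))) * ennreal (normal_density (b / a) (1 / sqrt a) t) \<partial>lborel)"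
    by (intro nn_integral_cong, subst eq, rule ennreal_mult) (use a in auto)
  also have "\<dots> = ennreal (sqrt (2 * pi / a) * exp (b\<^sup>2 / (2 * a))) * (\<integral>\<^sup>+t. ennreal (normal_density (b / a) (1 / sqrt a) t) \<partial>lborel)"
    by (rule nn_integral_cmult) simp
  also have "(\<integral>\<^sup>+t. ennreal (normal_density (b / a) (1 / sqrt a) t) \<partial>lborel) = 1"
  proof -
    have p: "0 < 1 / sqrt a" using a by simp
    show ?thesis
      using integrable_normal_density[OF p] integral_normal_density[OF p]
      by (subst nn_integral_eq_integral) auto
  qed
  finally show ?thesis by simp
qed

abbreviation "G01 \<equiv> gaussian_measure 0 1"

lemma prob_G: "sd > 0 \<Longrightarrow> prob_space (gaussian_measure mu sd)"
  unfolding gaussian_measure_def by (rule prob_space_normal_density)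

lemma sets_G[measurable_cong, simp]: "sets (gaussian_measure mu sd) = sets borel"
  unfolding gaussian_measure_def by simp

lemma space_G[simp]: "space (gaussian_measure mu sd) = UNIV"
  unfolding gaussian_measure_def by simp

lemma psf_G: "product_sigma_finite (\<lambda>_. G01)"
  unfolding product_sigma_finite_def
  by (simp add: prob_space_imp_sigma_finite prob_G)

lemma prob_PiG: "prob_space (PiM I (\<lambda>_. G01))"
  by (rule prob_space_PiM) (rule prob_G, simp)

lemma gauss_1d:
  fixes mu b :: real assumes y: "1 + 2 * mu > 0"
  shows "(\<integral>\<^sup>+t. ennreal (exp (- mu * t\<^sup>2 + b * t)) \<partial>G01)
       = ennreal (1 / sqrt (1 + 2 * mu) * exp (b\<^sup>2 / (2 * (1 + 2 * mu))))"
proof -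
  have "(\<integral>\<^sup>+t. ennreal (exp (- mu * t\<^sup>2 + b * t)) \<partial>G01)
      = (\<integral>\<^sup>+t. ennreal (normal_density 0 1 t) * ennreal (exp (- mu * t\<^sup>2 + b * t)) \<partial>lborel)"
    unfolding gaussian_measure_def by (subst nn_integral_density) auto
  also have "\<dots> = (\<integral>\<^sup>+t. ennreal (1 / sqrt (2 * pi)) * ennreal (exp (b * t - (1 + 2 * mu) * t\<^sup>2 / 2)) \<partial>lborel)"
  proof (intro nn_integral_cong)
    fix t :: real
    have "normal_density 0 1 t * exp (- mu * t\<^sup>2 + b * t) = 1 / sqrt (2 * pi) * exp (b * t - (1 + 2 * mu) * t\<^sup>2 / 2)"
    proof -
      have "exp (- t\<^sup>2 / 2) * exp (- mu * t\<^sup>2 + b * t) = exp (- t\<^sup>2 / 2 + (- mu * t\<^sup>2 + b * t))"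
        by (rule mult_exp_exp)
      also have "- t\<^sup>2 / 2 + (- mu * t\<^sup>2 + b * t) = b * t - (1 + 2 * mu) * t\<^sup>2 / 2"
        by (simp add: algebra_simps)
      finally show ?thesis unfolding std_normal_density_def by simp
    qed
    then show "ennreal (normal_density 0 1 t) * ennreal (exp (- mu * t\<^sup>2 + b * t)) = ennreal (1 / sqrt (2 * pi)) * ennreal (exp (b * t - (1 + 2 * mu) * t\<^sup>2 / 2))"
      by (simp add: ennreal_mult''[symmetric] ennreal_mult[symmetric])
  qed
  also have "\<dots> = ennreal (1 / sqrt (2 * pi)) * (\<integral>\<^sup>+t. ennreal (exp (b * t - (1 + 2 * mu) * t\<^sup>2 / 2)) \<partial>lborel)"
    by (rule nn_integral_cmult) simp
  also have "\<dots> = ennreal (1 / sqrt (2 * pi)) * ennreal (sqrt (2 * pi / (1 + 2 * mu)) * exp (b\<^sup>2 / (2 * (1 + 2 * mu))))"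
    by (subst gauss_formula[OF y]) simp
  also have "\<dots> = ennreal (1 / sqrt (2 * pi) * (sqrt (2 * pi / (1 + 2 * mu)) * exp (b\<^sup>2 / (2 * (1 + 2 * mu)))))"
    by (rule ennreal_mult[symmetric]) (use y in auto)
  also have "1 / sqrt (2 * pi) * (sqrt (2 * pi / (1 + 2 * mu)) * exp (b\<^sup>2 / (2 * (1 + 2 * mu))))
     = 1 / sqrt (1 + 2 * mu) * exp (b\<^sup>2 / (2 * (1 + 2 * mu)))"
    using y by (simp add: real_sqrt_divide)
  finally show ?thesis .
qed

lemma hs:
  fixes c S :: real assumes c: "c \<ge> 0"
  shows "ennreal (exp (c * S\<^sup>2)) = (\<integral>\<^sup>+z. ennreal (exp (sqrt (2 * c) * S * z)) \<partial>G01)"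
proof -
  have "(\<integral>\<^sup>+z. ennreal (exp (sqrt (2 * c) * S * z)) \<partial>G01)
     = (\<integral>\<^sup>+z. ennreal (exp (- 0 * z\<^sup>2 + sqrt (2 * c) * S * z)) \<partial>G01)" by simp
  also have "\<dots> = ennreal (1 / sqrt (1 + 2 * 0) * exp ((sqrt (2 * c) * S)\<^sup>2 / (2 * (1 + 2 * 0))))"
    by (rule gauss_1d) simp
  also have "(sqrt (2 * c) * S)\<^sup>2 = 2 * c * S\<^sup>2" using c by (simp add: power_mult_distrib)
  finally show ?thesis by simp
qed

lemma exact_E:
  fixes L :: "'a set" and mu mu' :: real
  assumes fin: "finite L" and n: "card L = n" and n2: "n \<ge> 2"
    and y: "1 + 2 * mu > 0" and mu': "mu' \<ge> 0" and lt: "2 * mu' < 1 + 2 * mu"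
  shows "(\<integral>\<^sup>+g. ennreal (exp (- mu * (\<Sum>i\<in>L. (g i)\<^sup>2) + mu' * (\<Sum>i\<in>L. g i)\<^sup>2 / n)) \<partial>PiM L (\<lambda>_. G01))
       = ennreal ((1 / sqrt (1 + 2 * mu)) ^ n / sqrt (1 - 2 * mu' / (1 + 2 * mu)))"
proof -
  define \<alpha> where "\<alpha> = sqrt (2 * (mu' / n))"
  define yy where "yy = 1 + 2 * mu"
  have yy: "yy > 0" using y by (simp add: yy_def)
  interpret PS: product_sigma_finite "\<lambda>_. G01" by (rule psf_G)
  interpret P: prob_space "PiM L (\<lambda>_. G01)" by (rule prob_PiG)
  interpret G: prob_space G01 by (rule prob_G) simp
  interpret PP: pair_sigma_finite G01 "PiM L (\<lambda>_. G01)"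
    by (intro pair_sigma_finite.intro prob_space_imp_sigma_finite prob_PiG prob_G) simp
  have step1: "ennreal (exp (- mu * (\<Sum>i\<in>L. (g i)\<^sup>2) + mu' * (\<Sum>i\<in>L. g i)\<^sup>2 / n))
     = (\<integral>\<^sup>+z. (\<Prod>i\<in>L. ennreal (exp (- mu * (g i)\<^sup>2 + \<alpha> * z * g i))) \<partial>G01)" for g :: "'a \<Rightarrow> real"
  proof -
    have c: "mu' / n \<ge> 0" using mu' by simp
    have "ennreal (exp (- mu * (\<Sum>i\<in>L. (g i)\<^sup>2) + mu' * (\<Sum>i\<in>L. g i)\<^sup>2 / n))
        = ennreal (exp (- mu * (\<Sum>i\<in>L. (g i)\<^sup>2))) * ennreal (exp ((mu' / n) * (\<Sum>i\<in>L. g i)\<^sup>2))"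
    proof -
      have "- mu * (\<Sum>i\<in>L. (g i)\<^sup>2) + mu' * (\<Sum>i\<in>L. g i)\<^sup>2 / n = - mu * (\<Sum>i\<in>L. (g i)\<^sup>2) + (mu' / n) * (\<Sum>i\<in>L. g i)\<^sup>2" by simp
      then have "exp (- mu * (\<Sum>i\<in>L. (g i)\<^sup>2) + mu' * (\<Sum>i\<in>L. g i)\<^sup>2 / n) = exp (- mu * (\<Sum>i\<in>L. (g i)\<^sup>2)) * exp ((mu' / n) * (\<Sum>i\<in>L. g i)\<^sup>2)"
        by (simp only: exp_add)
      then show ?thesis
        by (simp only: ennreal_mult exp_ge_zero)
    qed
    also have "ennreal (exp ((mu' / n) * (\<Sum>i\<in>L. g i)\<^sup>2)) = (\<integral>\<^sup>+z. ennreal (exp (\<alpha> * (\<Sum>i\<in>L. g i) * z)) \<partial>G01)"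
      unfolding \<alpha>_def by (rule hs[OF c])
    also have "ennreal (exp (- mu * (\<Sum>i\<in>L. (g i)\<^sup>2))) * \<dots>
       = (\<integral>\<^sup>+z. ennreal (exp (- mu * (\<Sum>i\<in>L. (g i)\<^sup>2))) * ennreal (exp (\<alpha> * (\<Sum>i\<in>L. g i) * z)) \<partial>G01)"
      by (rule nn_integral_cmult[symmetric]) simp
    also have "\<dots> = (\<integral>\<^sup>+z. (\<Prod>i\<in>L. ennreal (exp (- mu * (g i)\<^sup>2 + \<alpha> * z * g i))) \<partial>G01)"
    proof (intro nn_integral_cong)
      fix z
      have "exp (- mu * (\<Sum>i\<in>L. (g i)\<^sup>2)) * exp (\<alpha> * (\<Sum>i\<in>L. g i) * z)
          = exp (\<Sum>i\<in>L. (- mu * (g i)\<^sup>2 + \<alpha> * z * g i))"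
      proof -
        have "(\<Sum>i\<in>L. (- mu * (g i)\<^sup>2 + \<alpha> * z * g i)) = (\<Sum>i\<in>L. - mu * (g i)\<^sup>2) + (\<Sum>i\<in>L. \<alpha> * z * g i)"
          by (rule sum.distrib)
        also have "\<dots> = - mu * (\<Sum>i\<in>L. (g i)\<^sup>2) + \<alpha> * (\<Sum>i\<in>L. g i) * z"
          by (simp add: sum_distrib_left[symmetric] sum_negf mult.commute mult.left_commute)
        finally show ?thesis by (simp add: exp_add[symmetric])
      qed
      also have "\<dots> = (\<Prod>i\<in>L. exp (- mu * (g i)\<^sup>2 + \<alpha> * z * g i))"
        by (rule exp_sum[OF fin])
      finally show "ennreal (exp (- mu * (\<Sum>i\<in>L. (g i)\<^sup>2))) * ennreal (exp (\<alpha> * (\<Sum>i\<in>L. g i) * z))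
          = (\<Prod>i\<in>L. ennreal (exp (- mu * (g i)\<^sup>2 + \<alpha> * z * g i)))"
        by (simp add: ennreal_mult[symmetric] prod_ennreal)
    qed
    finally show ?thesis .
  qed
  have "(\<integral>\<^sup>+g. ennreal (exp (- mu * (\<Sum>i\<in>L. (g i)\<^sup>2) + mu' * (\<Sum>i\<in>L. g i)\<^sup>2 / n)) \<partial>PiM L (\<lambda>_. G01))
      = (\<integral>\<^sup>+g. (\<integral>\<^sup>+z. (\<Prod>i\<in>L. ennreal (exp (- mu * (g i)\<^sup>2 + \<alpha> * z * g i))) \<partial>G01) \<partial>PiM L (\<lambda>_. G01))"
    by (intro nn_integral_cong) (rule step1)
  also have "\<dots> = (\<integral>\<^sup>+z. (\<integral>\<^sup>+g. (\<Prod>i\<in>L. ennreal (exp (- mu * (g i)\<^sup>2 + \<alpha> * z * g i))) \<partial>PiM L (\<lambda>_. G01)) \<partial>G01)"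
    by (rule PP.Fubini') measurable
  also have "\<dots> = (\<integral>\<^sup>+z. ennreal ((1 / sqrt yy) ^ n) * ennreal (exp (- (- (n * \<alpha>\<^sup>2 / (2 * yy))) * z\<^sup>2 + 0 * z)) \<partial>G01)"
  proof (intro nn_integral_cong)
    fix z
    have "(\<integral>\<^sup>+g. (\<Prod>i\<in>L. ennreal (exp (- mu * (g i)\<^sup>2 + \<alpha> * z * g i))) \<partial>PiM L (\<lambda>_. G01))
        = (\<Prod>i\<in>L. (\<integral>\<^sup>+t. ennreal (exp (- mu * t\<^sup>2 + (\<alpha> * z) * t)) \<partial>G01))"
      by (rule PS.product_nn_integral_prod[OF fin]) simp
    also have "\<dots> = (\<Prod>i\<in>L. ennreal (1 / sqrt yy * exp ((\<alpha> * z)\<^sup>2 / (2 * yy))))"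
      unfolding yy_def by (intro prod.cong refl gauss_1d[OF y])
    also have "\<dots> = ennreal ((1 / sqrt yy * exp ((\<alpha> * z)\<^sup>2 / (2 * yy))) ^ n)"
      using n yy by (simp add: ennreal_power)
    also have "(1 / sqrt yy * exp ((\<alpha> * z)\<^sup>2 / (2 * yy))) ^ n
        = (1 / sqrt yy) ^ n * exp (- (- (n * \<alpha>\<^sup>2 / (2 * yy))) * z\<^sup>2 + 0 * z)"
      by (simp add: power_mult_distrib exp_of_nat_mult[symmetric] field_simps)
    finally show "(\<integral>\<^sup>+g. (\<Prod>i\<in>L. ennreal (exp (- mu * (g i)\<^sup>2 + \<alpha> * z * g i))) \<partial>PiM L (\<lambda>_. G01))
        = ennreal ((1 / sqrt yy) ^ n) * ennreal (exp (- (- (n * \<alpha>\<^sup>2 / (2 * yy))) * z\<^sup>2 + 0 * z))"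
      using yy by (simp add: ennreal_mult[symmetric])
  qed
  also have "\<dots> = ennreal ((1 / sqrt yy) ^ n) * (\<integral>\<^sup>+z. ennreal (exp (- (- (n * \<alpha>\<^sup>2 / (2 * yy))) * z\<^sup>2 + 0 * z)) \<partial>G01)"
    by (rule nn_integral_cmult) simp
  also have "n * \<alpha>\<^sup>2 = 2 * mu'"
    using mu' n2 by (simp add: \<alpha>_def)
  also have "(\<integral>\<^sup>+z. ennreal (exp (- (- (2 * mu' / (2 * yy))) * z\<^sup>2 + 0 * z)) \<partial>G01)
      = ennreal (1 / sqrt (1 + 2 * (- (2 * mu' / (2 * yy)))) * exp (0\<^sup>2 / (2 * (1 + 2 * (- (2 * mu' / (2 * yy)))))))"
  proof (rule gauss_1d)
    show "0 < 1 + 2 * - (2 * mu' / (2 * yy))" using lt yy by (simp add: yy_def field_simps)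
  qed
  also have "ennreal ((1 / sqrt yy) ^ n) * \<dots> = ennreal ((1 / sqrt yy) ^ n / sqrt (1 - 2 * mu' / yy))"
  proof -
    have "2 * mu' / yy < 1" using lt yy by (simp add: yy_def)
    then have pos: "0 \<le> 1 / sqrt (1 - 2 * mu' / yy)" by simp
    have pos2: "0 \<le> (1 / sqrt yy) ^ n" using yy by simp
    show ?thesis
    proof -
      have e1: "1 + 2 * (- (2 * mu' / (2 * yy))) = 1 - 2 * mu' / yy" by simp
      have e2: "exp ((0::real)\<^sup>2 / (2 * (1 - 2 * mu' / yy))) = 1" by simp
      have e3: "ennreal ((1 / sqrt yy) ^ n) * ennreal (1 / sqrt (1 - 2 * mu' / yy))
          = ennreal ((1 / sqrt yy) ^ n * (1 / sqrt (1 - 2 * mu' / yy)))"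
        by (rule ennreal_mult[OF pos2 pos, symmetric])
      have e4: "(1 / sqrt yy) ^ n * (1 / sqrt (1 - 2 * mu' / yy)) = (1 / sqrt yy) ^ n / sqrt (1 - 2 * mu' / yy)"
        by (simp only: times_divide_eq_right mult_1_right)
      show ?thesis unfolding e1 e2 mult_1_right e3 e4 ..
    qed
  qed
  finally show ?thesis unfolding yy_def .
qed

lemma sqrt_exp_bound:
  fixes Q :: real and n :: nat assumes Q: "Q \<ge> 0" and n: "n > 0"
  shows "sqrt Q \<le> sqrt (2 * n) * exp (Q / (4 * n))"
proof -
  have "Q / (2 * n) \<le> exp (Q / (2 * n))"
    using exp_ge_add_one_self[of "Q / (2 * n)"] by linarith
  then have "Q \<le> 2 * n * exp (Q / (2 * n))"
    using n by (simp add: field_simps)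
  also have "2 * n * exp (Q / (2 * n)) = (sqrt (2 * n) * exp (Q / (4 * n)))\<^sup>2"
  proof -
    have "exp (Q / (4 * n)) ^ 2 = exp (Q / (2 * n))"
      by (simp add: exp_of_nat_mult[symmetric])
    then show ?thesis by (simp add: power_mult_distrib)
  qed
  finally have "Q \<le> (sqrt (2 * n) * exp (Q / (4 * n)))\<^sup>2" .
  then show ?thesis
    by (metis Q real_le_lsqrt real_sqrt_ge_zero exp_ge_zero mult_nonneg_nonneg of_nat_0_le_iff mult_2 add_nonneg_nonneg)
qed

lemma pointwise_bound:
  fixes Q b w S1 S2 :: real and n :: nat
  assumes Q: "Q \<ge> 0" and n: "n > 0" and S2: "S2 = Q + n * b\<^sup>2" and S1: "S1 = n * b"
  shows "sqrt Q * normal_density 0 1 (b + sqrt Q * w)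
    \<le> 1 / sqrt (2 * pi) * sqrt (2 * n) *
       exp (- (w\<^sup>2 / 4 - 1 / (4 * n)) * S2 + (w\<^sup>2 / 4 + 1 / (4 * n)) * S1\<^sup>2 / n)"
proof -
  have sq: "(sqrt Q)\<^sup>2 = Q" using Q by simp
  have e1: "- (b + sqrt Q * w)\<^sup>2 / 2 \<le> - Q * w\<^sup>2 / 4 + b\<^sup>2 / 2"
  proof -
    have "0 \<le> (sqrt Q * w / sqrt 2 + sqrt 2 * b)\<^sup>2" by simp
    also have "(sqrt Q * w / sqrt 2 + sqrt 2 * b)\<^sup>2 = Q * w\<^sup>2 / 2 + 2 * sqrt Q * w * b + 2 * b\<^sup>2"
      using Q by (simp add: power2_eq_square field_simps)
    finally have "0 \<le> Q * w\<^sup>2 / 2 + 2 * sqrt Q * w * b + 2 * b\<^sup>2" .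
    moreover have "(b + sqrt Q * w)\<^sup>2 = b\<^sup>2 + 2 * sqrt Q * w * b + Q * w\<^sup>2"
      using Q by (simp add: power2_eq_square algebra_simps)
    ultimately show ?thesis by (simp add: field_simps)
  qed
  have "sqrt Q * normal_density 0 1 (b + sqrt Q * w) = 1 / sqrt (2 * pi) * (sqrt Q * exp (- (b + sqrt Q * w)\<^sup>2 / 2))"
    unfolding std_normal_density_def by simp
  also have "\<dots> \<le> 1 / sqrt (2 * pi) * ((sqrt (2 * n) * exp (Q / (4 * n))) * exp (- Q * w\<^sup>2 / 4 + b\<^sup>2 / 2))"
  proof -
    have ee: "exp (- (b + sqrt Q * w)\<^sup>2 / 2) \<le> exp (- Q * w\<^sup>2 / 4 + b\<^sup>2 / 2)" using e1 by simp
    show ?thesis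
      by (intro mult_left_mono mult_mono sqrt_exp_bound Q n ee) auto
  qed
  also have "(sqrt (2 * n) * exp (Q / (4 * n))) * exp (- Q * w\<^sup>2 / 4 + b\<^sup>2 / 2)
      = sqrt (2 * n) * exp (Q / (4 * n) + (- Q * w\<^sup>2 / 4 + b\<^sup>2 / 2))"
    by (simp add: exp_add)
  also have "Q / (4 * n) + (- Q * w\<^sup>2 / 4 + b\<^sup>2 / 2)
      = - (w\<^sup>2 / 4 - 1 / (4 * n)) * S2 + (w\<^sup>2 / 4 + 1 / (4 * n)) * S1\<^sup>2 / n"
    using n unfolding S1 S2 by (simp add: field_simps power2_eq_square)
  finally show ?thesis by (simp add: mult.assoc)
qed

lemma K_bound:
  fixes n :: nat and s2 w :: real
  assumes n6: "n \<ge> 6" and s2: "s2 > 0"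
  defines "N \<equiv> real n + 1"
  defines "c \<equiv> real n / N"
  defines "p \<equiv> sqrt (N * s2) * c"
  shows "1 / sqrt (2 * pi) * sqrt (2 * real n) *
          ((1 / sqrt (1 + 2 * (w\<^sup>2 / 4 - 1 / (4 * n)))) ^ n /
             sqrt (1 - 2 * (w\<^sup>2 / 4 + 1 / (4 * n)) / (1 + 2 * (w\<^sup>2 / 4 - 1 / (4 * n)))))
       \<le> 16 / sqrt s2 * (p / (sqrt (1 + c * w\<^sup>2)) ^ 3) * exp (- (p * w / sqrt (1 + c * w\<^sup>2))\<^sup>2 / (16 * s2))"
proof -
  define v where "v = w\<^sup>2"
  have v0: "v \<ge> 0" by (simp add: v_def)
  define q where "q = 1 + v / 2"
  have q1: "q \<ge> 1" using v0 by (simp add: q_def)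
  define y where "y = 1 + 2 * (w\<^sup>2 / 4 - 1 / (4 * n))"
  have n0: "real n \<ge> 6" using n6 by simp
  have y_eq: "y = q - 1 / (2 * n)" unfolding y_def q_def v_def using n0 by (simp add: field_simps)
  define e where "e = 1 - 1 / (2 * real n)"
  have e0: "e > 0" "e \<le> 1" using n0 by (auto simp: e_def field_simps)
  have yqe: "y \<ge> q * e" unfolding y_eq e_def using q1 n0
    by (simp add: algebra_simps) (simp add: field_simps)
  have y0: "y > 0" using yqe q1 e0 by (smt (verit) mult_pos_pos)
  have r1: "1 - 2 * (w\<^sup>2 / 4 + 1 / (4 * n)) / y = (1 - 1 / n) / y"
  proof -
    have a: "y - 2 * (w\<^sup>2 / 4 + 1 / (4 * n)) = 1 - 1 / n" unfolding y_def using n0 by (simp add: field_simps)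
    have "1 - 2 * (w\<^sup>2 / 4 + 1 / (4 * n)) / y = (y - 2 * (w\<^sup>2 / 4 + 1 / (4 * n))) / y"
      using y0 by (simp add: diff_divide_distrib)
    then show ?thesis unfolding a .
  qed
  have n1: "1 - 1 / real n > 0" using n0 by simp
  define k where "k = n - 4"
  have nk: "n = Suc (Suc (Suc (Suc k)))" using n6 by (simp add: k_def)
  have k2: "real k \<ge> 2" using n6 by (simp add: k_def)
  have rn: "real n = real k + 4" using nk by simp
  have lhs: "(1 / sqrt y) ^ n / sqrt ((1 - 1 / n) / y) = (1 / sqrt y) ^ 3 * (1 / sqrt y) ^ k / sqrt (1 - 1 / n)"
  proof -
    have nn: "n = 3 + k + 1" using nk by simp
    have "(1 / sqrt y) ^ n = (1 / sqrt y) ^ 3 * (1 / sqrt y) ^ k * (1 / sqrt y)"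
      unfolding nn power_add by simp
    moreover have "sqrt ((1 - 1 / n) / y) = sqrt (1 - 1 / n) / sqrt y" by (simp add: real_sqrt_divide)
    moreover have "B * (1 / sqrt y) / (sqrt (1 - 1 / n) / sqrt y) = B / sqrt (1 - 1 / n)" for B
      using y0 n1 by (simp add: field_simps)
    ultimately show ?thesis by simp
  qed
  have A: "1 / sqrt y \<le> 1 / sqrt q * (1 / sqrt e)"
  proof -
    have "sqrt (q * e) \<le> sqrt y" using yqe by simp
    then have "1 / sqrt y \<le> 1 / sqrt (q * e)"
      by (intro divide_left_mono) (use y0 q1 e0 in \<open>auto intro!: mult_pos_pos\<close>)
    then show ?thesis by (simp add: real_sqrt_mult)
  qed
  have A0: "0 \<le> 1 / sqrt y" using y0 by simp
  have Bern: "e ^ (k + 3) \<ge> 1 / 2"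
  proof -
    have ex: "(1 + (- 1 / (2 * real n))) = e" unfolding e_def by simp
    have "1 + real (k + 3) * (- 1 / (2 * real n)) \<le> e ^ (k + 3)"
      unfolding ex[symmetric] by (rule Bernoulli_inequality) (use n0 in \<open>simp add: field_simps\<close>)
    moreover have "1 + real (k + 3) * (- 1 / (2 * real n)) \<ge> 1 / 2"
      using n0 rn by (simp add: field_simps)
    ultimately show ?thesis by linarith
  qed
  have Eb: "(1 / sqrt e) ^ (k + 3) \<le> sqrt 2"
  proof -
    have "(1 / sqrt e) ^ (k + 3) = 1 / sqrt (e ^ (k + 3))"
      by (simp add: power_one_over real_sqrt_power)
    also have "\<dots> \<le> 1 / sqrt (1 / 2)"
      using Bern e0 by (intro divide_left_mono) auto
    also have "\<dots> = sqrt 2" by (simp add: real_sqrt_divide)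
    finally show ?thesis .
  qed
  have cdef: "c = real n / (real n + 1)" unfolding c_def N_def by simp
  have c1: "c \<le> 1" "c \<ge> 1 / 2" "c > 0" using n0 unfolding cdef by (auto simp: field_simps)
  have cvv: "c * v \<le> 1 * v" using c1 v0 by (intro mult_right_mono) auto
  have cv: "1 + c * v \<le> 2 * q" using cvv v0 unfolding q_def by simp
  have cvn: "c * v \<ge> 0" using c1 v0 by simp
  have cv0: "1 + c * v > 0" using cvn by linarith
  have Q3: "(1 / sqrt q) ^ 3 \<le> 2 * sqrt 2 / (sqrt (1 + c * v)) ^ 3"
  proof -
    have "sqrt (1 + c * v) \<le> sqrt 2 * sqrt q" using cv by (simp add: real_sqrt_mult[symmetric])
    then have "(sqrt (1 + c * v)) ^ 3 \<le> (sqrt 2 * sqrt q) ^ 3"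
      by (rule power_mono) (use cv0 in simp)
    also have "(sqrt 2 * sqrt q) ^ 3 = 2 * sqrt 2 * (sqrt q) ^ 3"
    proof -
      have "(sqrt 2)^3 = 2 * sqrt (2::real)" by (simp add: power3_eq_cube)
      then show ?thesis by (simp only: power_mult_distrib)
    qed
    finally have "(sqrt (1 + c * v)) ^ 3 \<le> 2 * sqrt 2 * (sqrt q) ^ 3" .
    then have "1 / (sqrt q) ^ 3 \<le> 2 * sqrt 2 / (sqrt (1 + c * v)) ^ 3"
    proof -
      assume h: "(sqrt (1 + c * v)) ^ 3 \<le> 2 * sqrt 2 * (sqrt q) ^ 3"
      have "1 / (sqrt q) ^ 3 = (2 * sqrt 2) / (2 * sqrt 2 * (sqrt q) ^ 3)" using q1 by simp
      also have "\<dots> \<le> 2 * sqrt 2 / (sqrt (1 + c * v)) ^ 3"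
        by (rule divide_left_mono[OF h]) (use q1 cv0 in auto)
      finally show ?thesis .
    qed
    then show ?thesis by (simp add: power_one_over)
  qed
  define X where "X = (p * w / sqrt (1 + c * w\<^sup>2))\<^sup>2 / (16 * s2)"
  have p2: "p\<^sup>2 = N * s2 * c\<^sup>2" unfolding p_def using s2 by (simp add: power_mult_distrib N_def)
  have Xeq: "X = N * c\<^sup>2 * v / (16 * (1 + c * v))"
  proof -
    have "(p * w / sqrt (1 + c * w\<^sup>2))\<^sup>2 = p\<^sup>2 * v / (1 + c * v)"
      using cv0 unfolding v_def by (simp add: power_divide power_mult_distrib)
    then have "X = p\<^sup>2 * v / (1 + c * v) / (16 * s2)" unfolding X_def by simp
    also have "\<dots> = (N * c\<^sup>2 * v * s2) / (16 * (1 + c * v) * s2)"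
      unfolding p2 by (simp add: divide_divide_eq_left mult_ac)
    also have "\<dots> = N * c\<^sup>2 * v / (16 * (1 + c * v))" using s2 by simp
    finally show ?thesis .
  qed
  have lnq: "ln q \<ge> v / (2 + v)"
  proof -
    have "ln (1 / q) \<le> 1 / q - 1" using q1 by (intro ln_le_minus_one) simp
    moreover have "ln (1 / q) = - ln q" using q1 by (simp add: ln_div)
    ultimately have "- ln q \<le> 1 / q - 1" by simp
    moreover have "1 / q - 1 = - (v / (2 + v))" unfolding q_def using v0 by (simp add: field_simps)
    ultimately show ?thesis by linarith
  qed
  have Xle: "X \<le> real k / 2 * ln q"
  proof -
    have NN0: "N > 0" unfolding N_def by simp
    have Nc_eq: "N * c\<^sup>2 = real n * (real n / N)" unfolding c_def using NN0 by (simp add: power2_eq_square)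
    have "real n / N \<le> 1" using NN0 unfolding N_def by simp
    then have "real n * (real n / N) \<le> real n * 1" by (intro mult_left_mono) auto
    then have Nc: "N * c\<^sup>2 \<le> real n" unfolding Nc_eq by simp
    have "X \<le> real n * v / (16 * (1 + c * v))"
      unfolding Xeq using cv0 v0 Nc by (intro divide_right_mono mult_right_mono) auto
    also have "\<dots> \<le> real n * v / (16 * (1 + v / 2))"
    proof -
      have "(1/2) * v \<le> c * v" using c1 v0 by (intro mult_right_mono) auto
      then have "16 * (1 + v / 2) \<le> 16 * (1 + c * v)" by simp
      then show ?thesis using v0 n0 by (intro divide_left_mono) auto
    qed
    also have "\<dots> = real n / 8 * (v / (2 + v))" using v0 by (simp add: field_simps)
    also have "\<dots> \<le> real k / 2 * (v / (2 + v))"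
      using v0 rn k2 by (intro mult_right_mono) (auto simp: field_simps)
    also have "\<dots> \<le> real k / 2 * ln q" using lnq by (intro mult_left_mono) auto
    finally show ?thesis .
  qed
  have Kb: "(1 / sqrt q) ^ k \<le> exp (- X)"
  proof -
    have "exp X \<le> exp (real k / 2 * ln q)" using Xle by simp
    also have "exp (real k / 2 * ln q) = (sqrt q) ^ k"
    proof -
      have "exp (real k / 2 * ln q) = exp (real k * ln (sqrt q))" using q1 by (simp add: ln_sqrt)
      also have "\<dots> = exp (ln (sqrt q)) ^ k" by (rule exp_of_nat_mult)
      also have "\<dots> = (sqrt q) ^ k" using q1 by simp
      finally show ?thesis .
    qed
    finally have h: "exp X \<le> (sqrt q) ^ k" .
    have "1 / (sqrt q) ^ k \<le> 1 / exp X" by (rule divide_left_mono[OF h]) (use q1 in auto)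
    then show ?thesis by (simp add: power_one_over exp_minus inverse_eq_divide)
  qed
  have Sb: "sqrt (2 * real n) \<le> 2 * p / sqrt s2"
  proof -
    have N0: "N > 0" unfolding N_def by simp
    have p0': "p \<ge> 0" unfolding p_def using c1 s2 N0 by simp
    have "(2 * p / sqrt s2)\<^sup>2 = 4 * (N * c\<^sup>2)"
      using s2 by (simp add: power_divide power_mult_distrib p2)
    also have "N * c\<^sup>2 = real n * real n / N" unfolding c_def using N0 by (simp add: power2_eq_square)
    also have "2 * real n \<le> 4 * (real n * real n / N)"
      using N0 n0 unfolding N_def by (simp add: field_simps)
    then have "2 * real n \<le> (2 * p / sqrt s2)\<^sup>2" using calculation by simp
    then show ?thesis using p0' s2 by (intro real_le_lsqrt) auto
  qed
  have n1b: "1 / sqrt (1 - 1 / real n) \<le> sqrt 2"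
  proof -
    have "1 / 2 \<le> 1 - 1 / real n" using n0 by (simp add: field_simps)
    then have "1 / sqrt (1 - 1 / real n) \<le> 1 / sqrt (1 / 2)" using n1 by (intro divide_left_mono) auto
    then show ?thesis by (simp add: real_sqrt_divide)
  qed
  have p0: "p \<ge> 0" unfolding p_def using c1 s2 N_def by simp
  have pi1: "1 / sqrt (2 * pi) \<le> 1"
  proof -
    have "1 \<le> 2 * pi" using pi_gt3 by simp
    then have "sqrt 1 \<le> sqrt (2 * pi)" by (subst real_sqrt_le_iff) 
    then show ?thesis by simp
  qed
  have "(1 / sqrt y) ^ 3 * (1 / sqrt y) ^ k \<le> (1 / sqrt q * (1 / sqrt e)) ^ 3 * (1 / sqrt q * (1 / sqrt e)) ^ k"
    using A A0 q1 e0 by (intro mult_mono power_mono) auto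
  also have "\<dots> = (1 / sqrt q) ^ 3 * (1 / sqrt q) ^ k * (1 / sqrt e) ^ (k + 3)"
  proof -
    have gen: "(a * b) ^ 3 * (a * b) ^ k = a ^ 3 * a ^ k * b ^ (k + 3)" for a b :: real
      by (simp add: power_mult_distrib power_add mult_ac)
    show ?thesis by (rule gen)
  qed
  also have "\<dots> \<le> (2 * sqrt 2 / (sqrt (1 + c * v)) ^ 3) * exp (- X) * sqrt 2"
    using Q3 Kb Eb q1 e0 cv0 by (intro mult_mono) auto
  finally have core: "(1 / sqrt y) ^ 3 * (1 / sqrt y) ^ k \<le> (2 * sqrt 2 / (sqrt (1 + c * v)) ^ 3) * exp (- X) * sqrt 2" .
  have "1 / sqrt (2 * pi) * sqrt (2 * real n) * ((1 / sqrt y) ^ n / sqrt ((1 - 1 / n) / y))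
      = 1 / sqrt (2 * pi) * sqrt (2 * real n) * (1 / sqrt (1 - 1 / n)) * ((1 / sqrt y) ^ 3 * (1 / sqrt y) ^ k)"
    unfolding lhs by simp
  also have "\<dots> \<le> 1 * (2 * p / sqrt s2) * sqrt 2 * ((2 * sqrt 2 / (sqrt (1 + c * v)) ^ 3) * exp (- X) * sqrt 2)"
    by (rule mult_mono[OF mult_mono[OF mult_mono[OF pi1 Sb] n1b] core]) (use A0 cv0 p0 s2 n1 in auto)
  also have "\<dots> = 8 * sqrt 2 / sqrt s2 * (p / (sqrt (1 + c * v)) ^ 3) * exp (- X)"
    by (simp add: field_simps)
  also have "\<dots> \<le> 16 / sqrt s2 * (p / (sqrt (1 + c * v)) ^ 3) * exp (- X)"
  proof -
    have "8 * sqrt 2 \<le> (16::real)"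
    proof -
      have "sqrt 2 \<le> (2::real)" by (rule real_le_lsqrt) auto
      then show ?thesis by simp
    qed
    then show ?thesis using s2 p0 cv0 by (intro mult_right_mono divide_right_mono) auto
  qed
  finally have fin: "1 / sqrt (2 * pi) * sqrt (2 * real n) * ((1 / sqrt y) ^ n / sqrt ((1 - 1 / n) / y))
      \<le> 16 / sqrt s2 * (p / (sqrt (1 + c * v)) ^ 3) * exp (- X)" .
  from fin r1 show ?thesis unfolding y_def v_def X_def by simp
qed

lemma theta_deriv:
  fixes p c w :: real assumes c: "c > 0"
  shows "((\<lambda>w. p * w / sqrt (1 + c * w\<^sup>2)) has_real_derivative p / (sqrt (1 + c * w\<^sup>2)) ^ 3) (at w)"
proof -
  have pos: "1 + c * w\<^sup>2 > 0" using c by (simp add: add_pos_nonneg)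
  define s where "s = sqrt (1 + c * w\<^sup>2)"
  have s0: "s > 0" using pos by (simp add: s_def)
  have ss: "s * s = 1 + c * w\<^sup>2" using pos by (simp add: s_def)
  have d1: "((\<lambda>w. 1 + c * w\<^sup>2) has_real_derivative c * (2 * w)) (at w)"
    by (auto intro!: derivative_eq_intros)
  have d2: "((\<lambda>w. sqrt (1 + c * w\<^sup>2)) has_real_derivative (inverse (sqrt (1 + c * w\<^sup>2)) / 2) * (c * (2 * w))) (at w)"
    by (rule DERIV_chain2[OF DERIV_real_sqrt[OF pos] d1])
  have d3: "((\<lambda>w. p * w) has_real_derivative p) (at w)"
    by (auto intro!: derivative_eq_intros)
  have d4: "((\<lambda>w. p * w / sqrt (1 + c * w\<^sup>2)) has_real_derivative
       (p * sqrt (1 + c * w\<^sup>2) - (inverse (sqrt (1 + c * w\<^sup>2)) / 2) * (c * (2 * w)) * (p * w)) / (sqrt (1 + c * w\<^sup>2) * sqrt (1 + c * w\<^sup>2))) (at w)"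
    using DERIV_divide[OF d3 d2] pos by (simp add: mult.commute)
  have eq: "(p * sqrt (1 + c * w\<^sup>2) - (inverse (sqrt (1 + c * w\<^sup>2)) / 2) * (c * (2 * w)) * (p * w)) / (sqrt (1 + c * w\<^sup>2) * sqrt (1 + c * w\<^sup>2))
      = p / (sqrt (1 + c * w\<^sup>2)) ^ 3"
    unfolding s_def[symmetric]
  proof -
    have "p * s - inverse s / 2 * (c * (2 * w)) * (p * w) = p * (s * s - c * w\<^sup>2) / s"
      using s0 by (simp add: field_simps power2_eq_square)
    also have "\<dots> = p / s" unfolding ss by simp
    finally show "(p * s - inverse s / 2 * (c * (2 * w)) * (p * w)) / (s * s) = p / s ^ 3"
      using s0 by (simp add: power3_eq_cube)
  qed
  show ?thesis using d4 unfolding eq .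
qed

lemma subst_bound:
  fixes h :: "real \<Rightarrow> ennreal" and p c :: real
  assumes hm[measurable]: "h \<in> borel_measurable borel" and p: "p > 0" and c: "c > 0"
  shows "(\<integral>\<^sup>+w. h (p * w / sqrt (1 + c * w\<^sup>2)) * ennreal (p / (sqrt (1 + c * w\<^sup>2)) ^ 3) \<partial>lborel)
       \<le> (\<integral>\<^sup>+u. h u \<partial>lborel)"
proof -
  define th where "th w = p * w / sqrt (1 + c * w\<^sup>2)" for w
  define th' where "th' w = p / (sqrt (1 + c * w\<^sup>2)) ^ 3" for w
  have pos: "1 + c * w\<^sup>2 > 0" for w using c by (simp add: add_pos_nonneg)
  have der: "(th has_real_derivative th' w) (at w)" for w
    unfolding th_def th'_def by (rule theta_deriv[OF c])
  have cont: "continuous_on A th'" for A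
    unfolding th'_def using pos by (intro continuous_intros) (auto simp: less_imp_neq[symmetric])
  have th'0: "th' w \<ge> 0" for w unfolding th'_def using p pos[of w] by (intro divide_nonneg_nonneg) auto
  define F where "F w = h (th w) * ennreal (th' w)" for w
  have Fm[measurable]: "F \<in> borel_measurable borel"
    unfolding F_def th_def th'_def by measurable
  have fin: "(\<integral>\<^sup>+w. F w * indicator {- real i..real i} w \<partial>lborel) \<le> (\<integral>\<^sup>+u. h u \<partial>lborel)" for i :: nat
  proof (cases "i = 0")
    case True
    have "(\<integral>\<^sup>+w. F w * indicator {- real i..real i} w \<partial>lborel) = (\<integral>\<^sup>+w. F w * indicator {0} w \<partial>lborel)"
      using True by simp
    also have "\<dots> = 0" by (rule nn_integral_null_set) (auto simp: null_sets_def)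
    finally show ?thesis by simp
  next
    case False
    then have lt: "- real i < real i" by simp
    have "(\<integral>\<^sup>+u. h u * indicator {th (- real i)..th (real i)} u \<partial>lborel)
        = (\<integral>\<^sup>+w. h (th w) * th' w * indicator {- real i..real i} w \<partial>lborel)"
      by (rule nn_integral_substitution_aux[OF hm _ der cont th'0 lt]) simp
    moreover have "(\<integral>\<^sup>+u. h u * indicator {th (- real i)..th (real i)} u \<partial>lborel) \<le> (\<integral>\<^sup>+u. h u \<partial>lborel)"
      by (intro nn_integral_mono) (auto split: split_indicator)
    ultimately show ?thesis unfolding F_def by simp
  qed
  have inc: "incseq (\<lambda>i w. F w * indicator {- real i..real i} w)"
    by (auto simp: incseq_def le_fun_def split: split_indicator intro!: mult_left_mono)
  have sup: "(SUP i. F w * indicator {- real i..real i} w) = F w" for w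
  proof (rule antisym)
    show "(SUP i. F w * indicator {- real i..real i} w) \<le> F w"
      by (rule SUP_least) (auto split: split_indicator)
    show "F w \<le> (SUP i. F w * indicator {- real i..real i} w)"
    proof (rule SUP_upper2[where i="nat \<lceil>\<bar>w\<bar>\<rceil>"])
      have "w \<in> {- real (nat \<lceil>\<bar>w\<bar>\<rceil>)..real (nat \<lceil>\<bar>w\<bar>\<rceil>)}"
        by auto (linarith+)
      then show "F w \<le> F w * indicator {- real (nat \<lceil>\<bar>w\<bar>\<rceil>)..real (nat \<lceil>\<bar>w\<bar>\<rceil>)} w" by simp
    qed simp
  qed
  have "(\<integral>\<^sup>+w. F w \<partial>lborel) = (\<integral>\<^sup>+w. (SUP i. F w * indicator {- real i..real i} w) \<partial>lborel)"
    by (simp add: sup)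
  also have "\<dots> = (SUP i. (\<integral>\<^sup>+w. F w * indicator {- real i..real i} w \<partial>lborel))"
    by (rule nn_integral_monotone_convergence_SUP[OF inc]) measurable
  also have "\<dots> \<le> (\<integral>\<^sup>+u. h u \<partial>lborel)"
    by (rule SUP_least) (rule fin)
  finally show ?thesis unfolding F_def th_def th'_def .
qed

lemma sum_sq_shift:
  fixes g :: "'a \<Rightarrow> real"
  assumes fin: "finite L" and n: "card L = n" and b: "b = (\<Sum>y\<in>L. g y) / n" and n0: "n > 0"
  shows "(\<Sum>y\<in>L. (g y - a)\<^sup>2) = (\<Sum>y\<in>L. (g y - b)\<^sup>2) + n * (b - a)\<^sup>2"
proof -
  have e: "(g y - a)\<^sup>2 = (g y - b)\<^sup>2 + (2 * (b - a) * (g y - b) + (b - a)\<^sup>2)" for y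
    by (simp add: power2_eq_square algebra_simps)
  have "(\<Sum>y\<in>L. (g y - a)\<^sup>2) = (\<Sum>y\<in>L. (g y - b)\<^sup>2) + (\<Sum>y\<in>L. 2 * (b - a) * (g y - b) + (b - a)\<^sup>2)"
    unfolding e by (rule sum.distrib)
  also have "(\<Sum>y\<in>L. 2 * (b - a) * (g y - b) + (b - a)\<^sup>2) = 2 * (b - a) * (\<Sum>y\<in>L. (g y - b)) + n * (b - a)\<^sup>2"
    using n by (simp add: sum.distrib sum_distrib_left)
  also have "(\<Sum>y\<in>L. (g y - b)) = 0"
    using n n0 b by (simp add: sum_subtractf)
  finally show ?thesis by simp
qed

lemma aux_id:
  fixes N t b :: real assumes "N \<noteq> 0"
  shows "(t - (t + (N - 1) * b) / N)\<^sup>2 + (N - 1) * (b - (t + (N - 1) * b) / N)\<^sup>2 = (N - 1) / N * (t - b)\<^sup>2"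
  using assms by (simp add: field_simps power2_eq_square)

lemma mc_alg_a:
  fixes g :: "'a \<Rightarrow> real"
  assumes fin: "finite L" and x: "x \<notin> L" and n: "card L = n" and n0: "n > 0"
    and b: "b = (\<Sum>y\<in>L. g y) / n"
    and a: "a = (\<Sum>y\<in>insert x L. (g(x := t)) y) / real (card (insert x L))"
  shows "a = (t + n * b) / (n + 1)"
proof -
  have cL: "card (insert x L) = n + 1" using fin x n by simp
  have s1: "(\<Sum>y\<in>L. (g(x := t)) y) = (\<Sum>y\<in>L. g y)"
    using x by (intro sum.cong) auto
  have sg: "(\<Sum>y\<in>L. g y) = n * b" using b n0 by simp
  show ?thesis
    unfolding a cL using fin x s1 sg by simp
qed

lemma mc_alg1:
  fixes g :: "'a \<Rightarrow> real"
  assumes fin: "finite L" and x: "x \<notin> L" and n: "card L = n" and n0: "n > 0"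
    and b: "b = (\<Sum>y\<in>L. g y) / n"
    and a: "a = (\<Sum>y\<in>insert x L. (g(x := t)) y) / real (card (insert x L))"
  shows "(g(x := t)) x - a = (real n / (real n + 1)) * (t - b)"
proof -
  have aeq: "a = (t + n * b) / (n + 1)" by (rule mc_alg_a[OF fin x n n0 b a])
  show ?thesis
    unfolding aeq by (simp add: field_simps)
qed

lemma mc_alg2:
  fixes g :: "'a \<Rightarrow> real"
  assumes fin: "finite L" and x: "x \<notin> L" and n: "card L = n" and n0: "n > 0"
    and b: "b = (\<Sum>y\<in>L. g y) / n" and Q: "Q = (\<Sum>y\<in>L. (g y - b)\<^sup>2)"
    and a: "a = (\<Sum>y\<in>insert x L. (g(x := t)) y) / real (card (insert x L))"
  shows "(\<Sum>y\<in>insert x L. ((g(x := t)) y - a)\<^sup>2) = Q + (real n / (real n + 1)) * (t - b)\<^sup>2"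
proof -
  have aeq: "a = (t + n * b) / (n + 1)" by (rule mc_alg_a[OF fin x n n0 b a])
  have s2: "(\<Sum>y\<in>L. ((g(x := t)) y - a)\<^sup>2) = (\<Sum>y\<in>L. (g y - a)\<^sup>2)"
    using x by (intro sum.cong) auto
  have "(\<Sum>y\<in>insert x L. ((g(x := t)) y - a)\<^sup>2) = (t - a)\<^sup>2 + (\<Sum>y\<in>L. (g y - a)\<^sup>2)"
    using fin x s2 by simp
  also have "(\<Sum>y\<in>L. (g y - a)\<^sup>2) = Q + n * (b - a)\<^sup>2"
    unfolding Q by (rule sum_sq_shift[OF fin n b n0])
  also have "(t - a)\<^sup>2 + (Q + n * (b - a)\<^sup>2) = Q + (real n / (real n + 1)) * (t - b)\<^sup>2"
    unfolding aeq using aux_id[of "real n + 1" t b] by (simp add: add_ac)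
  finally show ?thesis .
qed

lemma mc_value:
  fixes g :: "'a \<Rightarrow> real" and R :: real
  assumes fin: "finite L" and x: "x \<notin> L" and n: "card L = n" and n0: "n > 0"
    and b: "b = (\<Sum>y\<in>L. g y) / n" and Q: "Q = (\<Sum>y\<in>L. (g y - b)\<^sup>2)" and Qp: "Q > 0"
  shows "(let N = real (card (insert x L));
              a = (\<Sum>y\<in>insert x L. (g(x := b + sqrt Q * w)) y) / N;
              s = sqrt (\<Sum>y\<in>insert x L. ((g(x := b + sqrt Q * w)) y - a)\<^sup>2)
          in R * ((g(x := b + sqrt Q * w)) x - a) / s)
       = R * (n / (n + 1)) * w / sqrt (1 + (n / (n + 1)) * w\<^sup>2)"
proof -
  define t where "t = b + sqrt Q * w"
  define a where "a = (\<Sum>y\<in>insert x L. (g(x := t)) y) / real (card (insert x L))"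
  note A1 = mc_alg1[OF fin x n n0 b a_def]
  note A2 = mc_alg2[OF fin x n n0 b Q a_def]
  define c where "c = real n / (real n + 1)"
  have c0: "c \<ge> 0" unfolding c_def by simp
  have tb: "t - b = sqrt Q * w" unfolding t_def by simp
  have sq: "(\<Sum>y\<in>insert x L. ((g(x := t)) y - a)\<^sup>2) = Q * (1 + c * w\<^sup>2)"
    unfolding A2 tb c_def using Qp by (simp add: power_mult_distrib algebra_simps)
  have pos: "1 + c * w\<^sup>2 > 0" using c0 by (simp add: add_pos_nonneg)
  have "R * ((g(x := t)) x - a) / sqrt (Q * (1 + c * w\<^sup>2)) = R * (c * (sqrt Q * w)) / (sqrt Q * sqrt (1 + c * w\<^sup>2))"
    unfolding A1 tb c_def by (simp add: real_sqrt_mult)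
  also have "\<dots> = R * c * w / sqrt (1 + c * w\<^sup>2)"
    using Qp pos by (simp add: field_simps)
  finally show ?thesis unfolding t_def[symmetric] a_def[symmetric] Let_def sq c_def by simp
qed

lemma G01_singleton: "emeasure G01 {c} = 0"
proof -
  have "emeasure G01 {c} = (\<integral>\<^sup>+x. ennreal (normal_density 0 1 x) * indicator {c} x \<partial>lborel)"
    unfolding gaussian_measure_def by (rule emeasure_density) auto
  also have "\<dots> = 0" by (rule nn_integral_null_set) (auto simp: null_sets_def)
  finally show ?thesis .
qed

lemma AE_neq:
  fixes L :: "'a set"
  assumes fin: "finite L" and y1: "y1 \<in> L" and y2: "y2 \<in> L" and ne: "y1 \<noteq> y2"
  shows "AE g in PiM L (\<lambda>_. G01). g y1 \<noteq> g y2"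
proof -
  define L0 where "L0 = L - {y1}"
  have L: "L = insert y1 L0" "y1 \<notin> L0" "finite L0" "y2 \<in> L0" using y1 y2 ne fin by (auto simp: L0_def)
  interpret PS: product_sigma_finite "\<lambda>_. G01" by (rule psf_G)
  define S where "S = {g \<in> space (PiM L (\<lambda>_. G01)). g y1 = g y2}"
  have Sm[measurable]: "S \<in> sets (PiM L (\<lambda>_. G01))"
    unfolding S_def using y1 y2 by measurable
  have "emeasure (PiM L (\<lambda>_. G01)) S = (\<integral>\<^sup>+g. indicator S g \<partial>PiM L (\<lambda>_. G01))"
    using Sm by simp
  also have "\<dots> = (\<integral>\<^sup>+g. indicator S g \<partial>PiM (insert y1 L0) (\<lambda>_. G01))"
    using L(1) by simp
  also have "\<dots> = (\<integral>\<^sup>+g0. (\<integral>\<^sup>+t. indicator S (g0(y1 := t)) \<partial>G01) \<partial>PiM L0 (\<lambda>_. G01))"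
    using L by (intro PS.product_nn_integral_insert) (auto simp: L(1)[symmetric])
  also have "\<dots> = (\<integral>\<^sup>+g0. 0 \<partial>PiM L0 (\<lambda>_. G01))"
  proof (intro nn_integral_cong)
    fix g0 assume g0: "g0 \<in> space (PiM L0 (\<lambda>_. G01))"
    have "(\<integral>\<^sup>+t. indicator S (g0(y1 := t)) \<partial>G01) = (\<integral>\<^sup>+t. indicator {g0 y2} t \<partial>G01)"
    proof (intro nn_integral_cong)
      fix t
      have "g0(y1 := t) \<in> space (PiM L (\<lambda>_. G01))"
        using g0 L unfolding space_PiM by (auto intro!: PiE_fun_upd)
      moreover have "(g0(y1 := t)) y2 = g0 y2" using ne by simp
      ultimately show "indicator S (g0(y1 := t)) = (indicator {g0 y2} t :: ennreal)"
        unfolding S_def by (auto split: split_indicator)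
    qed
    also have "\<dots> = emeasure G01 {g0 y2}" by simp
    also have "\<dots> = 0" by (rule G01_singleton)
    finally show "(\<integral>\<^sup>+t. indicator S (g0(y1 := t)) \<partial>G01) = 0" .
  qed
  also have "\<dots> = 0" by simp
  finally have "S \<in> null_sets (PiM L (\<lambda>_. G01))" using Sm by (simp add: null_sets_def)
  then show ?thesis
    by (rule AE_I') (auto simp: S_def)
qed

lemma AE_Q_pos:
  fixes L :: "'a set"
  assumes fin: "finite L" and c2: "card L \<ge> 2"
  shows "AE g in PiM L (\<lambda>_. G01). (\<Sum>y\<in>L. (g y - (\<Sum>y\<in>L. g y) / card L)\<^sup>2) > 0"
proof -
  obtain y1 where y1: "y1 \<in> L" using c2 by fastforce
  have "card (L - {y1}) \<ge> 1" using c2 y1 fin by simp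
  then have "L - {y1} \<noteq> {}" by (metis card.empty not_one_le_zero)
  then obtain y2 where y2: "y2 \<in> L - {y1}" by blast
  have AE: "AE g in PiM L (\<lambda>_. G01). g y1 \<noteq> g y2"
    by (rule AE_neq[OF fin y1]) (use y2 in auto)
  show ?thesis
  proof (rule AE_mp[OF AE], intro AE_I2 impI)
    fix g :: "'a \<Rightarrow> real" assume ne: "g y1 \<noteq> g y2"
    define b where "b = (\<Sum>y\<in>L. g y) / card L"
    have nn: "(\<Sum>y\<in>L. (g y - b)\<^sup>2) \<ge> 0" by (intro sum_nonneg) simp
    have "(\<Sum>y\<in>L. (g y - b)\<^sup>2) \<noteq> 0"
    proof
      assume "(\<Sum>y\<in>L. (g y - b)\<^sup>2) = 0"
      then have "\<forall>y\<in>L. (g y - b)\<^sup>2 = 0" using fin by (subst (asm) sum_nonneg_eq_0_iff) auto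
      then have "g y1 = b" "g y2 = b" using y1 y2 by auto
      then show False using ne by simp
    qed
    then show "(\<Sum>y\<in>L. (g y - (\<Sum>y\<in>L. g y) / card L)\<^sup>2) > 0" using nn unfolding b_def by linarith
  qed
qed

lemma ennreal_mult3:
  fixes A T E :: real
  assumes "0 \<le> A" "0 \<le> T" "0 \<le> E"
  shows "ennreal (A * T * E) = ennreal A * (ennreal E * ennreal T)"
  using assms by (simp add: ennreal_mult mult_ac)

lemma main_bound:
  fixes L :: "'a set" and x :: 'a and h :: "real \<Rightarrow> ennreal" and s2 :: real
  assumes fin: "finite L" and xL: "x \<notin> L" and n: "card L = n" and n6: "n \<ge> 6" and s2: "s2 > 0"
    and hm[measurable]: "h \<in> borel_measurable borel"
  shows "(\<integral>\<^sup>+g. h (sqrt (real (card (insert x L)) * s2) * (g x - (\<Sum>y\<in>insert x L. g y) / real (card (insert x L)))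
              / sqrt (\<Sum>y\<in>insert x L. (g y - (\<Sum>y\<in>insert x L. g y) / real (card (insert x L)))\<^sup>2))
          \<partial>PiM (insert x L) (\<lambda>_. G01))
     \<le> ennreal (16 / sqrt s2) * (\<integral>\<^sup>+u. h u * ennreal (exp (- u\<^sup>2 / (16 * s2))) \<partial>lborel)"
proof -
  define R where "R = sqrt (real (card (insert x L)) * s2)"
  define V where "V g = R * (g x - (\<Sum>y\<in>insert x L. g y) / real (card (insert x L)))
              / sqrt (\<Sum>y\<in>insert x L. (g y - (\<Sum>y\<in>insert x L. g y) / real (card (insert x L)))\<^sup>2)" for g :: "'a \<Rightarrow> real"
  define c where "c = real n / (real n + 1)"
  define p where "p = R * c"
  have cN: "real (card (insert x L)) = real n + 1" using fin xL n by simp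
  have Rdef: "R = sqrt ((real n + 1) * s2)" unfolding R_def cN ..
  have n0: "n > 0" "real n > 0" using n6 by auto
  have c0: "c > 0" unfolding c_def using n0 by simp
  have p0: "p > 0" unfolding p_def Rdef using c0 s2 by simp
  define bf where "bf g = (\<Sum>y\<in>L. g y) / real n" for g :: "'a \<Rightarrow> real"
  define Qf where "Qf g = (\<Sum>y\<in>L. (g y - bf g)\<^sup>2)" for g :: "'a \<Rightarrow> real"
  define th where "th w = p * w / sqrt (1 + c * w\<^sup>2)" for w
  define th' where "th' w = p / (sqrt (1 + c * w\<^sup>2)) ^ 3" for w
  define k where "k g w = ennreal (sqrt (Qf g) * normal_density 0 1 (bf g + sqrt (Qf g) * w))" for g w
  interpret PS: product_sigma_finite "\<lambda>_. G01" by (rule psf_G)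
  interpret P: prob_space "PiM L (\<lambda>_. G01)" by (rule prob_PiG)
  interpret PP: pair_sigma_finite lborel "PiM L (\<lambda>_. G01)"
    by (intro pair_sigma_finite.intro prob_space_imp_sigma_finite prob_PiG lborel.sigma_finite_measure_axioms)
  have Vm[measurable]: "(\<lambda>g. h (V g)) \<in> borel_measurable (PiM (insert x L) (\<lambda>_. G01))"
    unfolding V_def by measurable
  have "(\<integral>\<^sup>+g. h (V g) \<partial>PiM (insert x L) (\<lambda>_. G01))
      = (\<integral>\<^sup>+g'. (\<integral>\<^sup>+t. h (V (g'(x := t))) \<partial>G01) \<partial>PiM L (\<lambda>_. G01))"
    by (rule PS.product_nn_integral_insert[OF fin xL Vm])
  also have "\<dots> = (\<integral>\<^sup>+g'. (\<integral>\<^sup>+w. h (th w) * k g' w \<partial>lborel) \<partial>PiM L (\<lambda>_. G01))"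
  proof (rule nn_integral_cong_AE)
    have AEQ: "AE g' in PiM L (\<lambda>_. G01). Qf g' > 0"
      using AE_Q_pos[OF fin] n6 n unfolding Qf_def bf_def by simp
    show "AE g' in PiM L (\<lambda>_. G01). (\<integral>\<^sup>+t. h (V (g'(x := t))) \<partial>G01) = (\<integral>\<^sup>+w. h (th w) * k g' w \<partial>lborel)"
    proof (rule AE_mp[OF AEQ], intro AE_I2 impI)
      fix g' :: "'a \<Rightarrow> real" assume Qp: "Qf g' > 0"
      define b where "b = bf g'"
      define Q where "Q = Qf g'"
      have Q0: "Q > 0" using Qp by (simp add: Q_def)
      have Vt: "V (g'(x := t)) = R * (c * (t - b)) / sqrt (Q + c * (t - b)\<^sup>2)" for t
      proof -
        define a where "a = (\<Sum>y\<in>insert x L. (g'(x := t)) y) / real (card (insert x L))"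
        have e1: "(g'(x := t)) x - a = c * (t - b)"
          unfolding c_def by (rule mc_alg1[OF fin xL n n0(1) _ a_def]) (simp add: b_def bf_def)
        have e2: "(\<Sum>y\<in>insert x L. ((g'(x := t)) y - a)\<^sup>2) = Q + c * (t - b)\<^sup>2"
          unfolding c_def by (rule mc_alg2[OF fin xL n n0(1) _ _ a_def]) (simp_all add: b_def bf_def Q_def Qf_def)
        show ?thesis unfolding V_def a_def[symmetric] e1 e2 ..
      qed
      define F where "F t = ennreal (normal_density 0 1 t) * h (R * (c * (t - b)) / sqrt (Q + c * (t - b)\<^sup>2))" for t
      have Fm[measurable]: "F \<in> borel_measurable borel" unfolding F_def by measurable
      have thb: "R * (c * (b + sqrt Q * w - b)) / sqrt (Q + c * (b + sqrt Q * w - b)\<^sup>2) = th w" for w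
      proof -
        have pos: "1 + c * w\<^sup>2 > 0" using c0 by (simp add: add_pos_nonneg)
        have "Q + c * (b + sqrt Q * w - b)\<^sup>2 = Q * (1 + c * w\<^sup>2)"
          using Q0 by (simp add: power_mult_distrib algebra_simps)
        then have "R * (c * (b + sqrt Q * w - b)) / sqrt (Q + c * (b + sqrt Q * w - b)\<^sup>2)
            = R * (c * (sqrt Q * w)) / (sqrt Q * sqrt (1 + c * w\<^sup>2))" by (simp add: real_sqrt_mult)
        also have "\<dots> = th w" unfolding th_def p_def using Q0 pos by (simp add: field_simps)
        finally show ?thesis .
      qed
      have "(\<integral>\<^sup>+t. h (V (g'(x := t))) \<partial>G01) = (\<integral>\<^sup>+t. h (R * (c * (t - b)) / sqrt (Q + c * (t - b)\<^sup>2)) \<partial>G01)"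
        unfolding Vt ..
      also have "\<dots> = (\<integral>\<^sup>+t. F t \<partial>lborel)"
        unfolding gaussian_measure_def F_def by (subst nn_integral_density) auto
      also have "\<dots> = ennreal \<bar>sqrt Q\<bar> * (\<integral>\<^sup>+w. F (b + sqrt Q * w) \<partial>lborel)"
        by (rule nn_integral_real_affine[OF Fm]) (use Q0 in simp)
      also have "\<dots> = (\<integral>\<^sup>+w. ennreal (sqrt Q) * F (b + sqrt Q * w) \<partial>lborel)"
        using Q0 by (subst nn_integral_cmult) auto
      also have "\<dots> = (\<integral>\<^sup>+w. h (th w) * k g' w \<partial>lborel)"
      proof (intro nn_integral_cong)
        fix w
        show "ennreal (sqrt Q) * F (b + sqrt Q * w) = h (th w) * k g' w"
          unfolding F_def thb k_def b_def[symmetric] Q_def[symmetric]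
          using Q0 by (simp add: ennreal_mult mult_ac)
      qed
      finally show "(\<integral>\<^sup>+t. h (V (g'(x := t))) \<partial>G01) = (\<integral>\<^sup>+w. h (th w) * k g' w \<partial>lborel)" .
    qed
  qed
  also have "\<dots> = (\<integral>\<^sup>+w. (\<integral>\<^sup>+g'. h (th w) * k g' w \<partial>PiM L (\<lambda>_. G01)) \<partial>lborel)"
    unfolding k_def bf_def Qf_def th_def by (rule PP.Fubini') measurable
  also have "\<dots> = (\<integral>\<^sup>+w. h (th w) * (\<integral>\<^sup>+g'. k g' w \<partial>PiM L (\<lambda>_. G01)) \<partial>lborel)"
    unfolding k_def bf_def Qf_def by (intro nn_integral_cong nn_integral_cmult) measurable
  also have "\<dots> \<le> (\<integral>\<^sup>+w. h (th w) * ennreal (16 / sqrt s2 * th' w * exp (- (th w)\<^sup>2 / (16 * s2))) \<partial>lborel)"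
  proof (intro nn_integral_mono mult_left_mono)
    fix w :: real
    define mu where "mu = w\<^sup>2 / 4 - 1 / real (4 * n)"
    define mu' where "mu' = w\<^sup>2 / 4 + 1 / real (4 * n)"
    define C where "C = 1 / sqrt (2 * pi) * sqrt (real (2 * n))"
    have n2: "2 \<le> n" using n6 by simp
    have ymu: "0 < 1 + 2 * mu"
      proof -
        have a1: "1 / real (4 * n) \<le> 1 / 4" using n6 by (intro divide_left_mono) auto
        have "w\<^sup>2 \<ge> 0" by simp
        have gen: "0 < 1 + 2 * (A / 4 - B)" if "0 \<le> A" "B \<le> 1/4" for A B :: real using that by (simp add: algebra_simps)
        show ?thesis unfolding mu_def by (rule gen) (use a1 in auto)
      qed
    have mu'0: "0 \<le> mu'" unfolding mu'_def by simp
    have ltmu: "2 * mu' < 1 + 2 * mu" unfolding mu_def mu'_def using n6 by (simp add: field_simps)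
    have ltmu2: "0 < 1 - 2 * mu' / (1 + 2 * mu)" using ltmu ymu by (simp add: field_simps)
    have kb: "k g' w \<le> ennreal (C * exp (- mu * (\<Sum>i\<in>L. (g' i)\<^sup>2) + mu' * (\<Sum>i\<in>L. g' i)\<^sup>2 / n))" for g'
    proof -
      have S2: "(\<Sum>i\<in>L. (g' i)\<^sup>2) = Qf g' + real n * (bf g')\<^sup>2"
        using sum_sq_shift[OF fin n bf_def[of g'] n0(1), of 0] unfolding Qf_def by simp
      have S1: "(\<Sum>i\<in>L. g' i) = real n * bf g'" unfolding bf_def using n0 by simp
      have Q0: "Qf g' \<ge> 0" unfolding Qf_def by (intro sum_nonneg) simp
      show ?thesis unfolding k_def C_def mu_def mu'_def
        by (rule ennreal_leI, rule pointwise_bound[OF Q0 n0(1) S2 S1])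
    qed
    have "(\<integral>\<^sup>+g'. k g' w \<partial>PiM L (\<lambda>_. G01))
        \<le> (\<integral>\<^sup>+g'. ennreal C * ennreal (exp (- mu * (\<Sum>i\<in>L. (g' i)\<^sup>2) + mu' * (\<Sum>i\<in>L. g' i)\<^sup>2 / n)) \<partial>PiM L (\<lambda>_. G01))"
    proof (intro nn_integral_mono)
      fix g' :: "'a \<Rightarrow> real"
      have Cn: "C \<ge> 0" unfolding C_def by simp
      have "ennreal (C * exp (- mu * (\<Sum>i\<in>L. (g' i)\<^sup>2) + mu' * (\<Sum>i\<in>L. g' i)\<^sup>2 / n))
          = ennreal C * ennreal (exp (- mu * (\<Sum>i\<in>L. (g' i)\<^sup>2) + mu' * (\<Sum>i\<in>L. g' i)\<^sup>2 / n))"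
        by (rule ennreal_mult[OF Cn]) simp
      then show "k g' w \<le> ennreal C * ennreal (exp (- mu * (\<Sum>i\<in>L. (g' i)\<^sup>2) + mu' * (\<Sum>i\<in>L. g' i)\<^sup>2 / n))"
        using kb[of g'] by simp
    qed
    also have "\<dots> = ennreal C * (\<integral>\<^sup>+g'. ennreal (exp (- mu * (\<Sum>i\<in>L. (g' i)\<^sup>2) + mu' * (\<Sum>i\<in>L. g' i)\<^sup>2 / n)) \<partial>PiM L (\<lambda>_. G01))"
      by (rule nn_integral_cmult) measurable
    also have "(\<integral>\<^sup>+g'. ennreal (exp (- mu * (\<Sum>i\<in>L. (g' i)\<^sup>2) + mu' * (\<Sum>i\<in>L. g' i)\<^sup>2 / n)) \<partial>PiM L (\<lambda>_. G01))
        = ennreal ((1 / sqrt (1 + 2 * mu)) ^ n / sqrt (1 - 2 * mu' / (1 + 2 * mu)))"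
      by (rule exact_E[OF fin n n2 ymu mu'0 ltmu])
    also have "ennreal C * ennreal ((1 / sqrt (1 + 2 * mu)) ^ n / sqrt (1 - 2 * mu' / (1 + 2 * mu)))
        = ennreal (C * ((1 / sqrt (1 + 2 * mu)) ^ n / sqrt (1 - 2 * mu' / (1 + 2 * mu))))"
      by (rule ennreal_mult[symmetric]) (use ymu ltmu2 in \<open>simp_all add: C_def\<close>)
    also have "\<dots> \<le> ennreal (16 / sqrt s2 * th' w * exp (- (th w)\<^sup>2 / (16 * s2)))"
    proof (rule ennreal_leI)
      show "C * ((1 / sqrt (1 + 2 * mu)) ^ n / sqrt (1 - 2 * mu' / (1 + 2 * mu)))
          \<le> 16 / sqrt s2 * th' w * exp (- (th w)\<^sup>2 / (16 * s2))"
        using K_bound[OF n6 s2, of w] unfolding C_def mu_def mu'_def th_def th'_def p_def c_def Rdef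
        by (simp add: mult_ac)
    qed
    finally show "(\<integral>\<^sup>+g'. k g' w \<partial>PiM L (\<lambda>_. G01)) \<le> ennreal (16 / sqrt s2 * th' w * exp (- (th w)\<^sup>2 / (16 * s2)))" .
  qed simp
  also have "\<dots> = ennreal (16 / sqrt s2) * (\<integral>\<^sup>+w. (h (th w) * ennreal (exp (- (th w)\<^sup>2 / (16 * s2)))) * ennreal (th' w) \<partial>lborel)"
  proof -
    have th'0: "th' w \<ge> 0" for w unfolding th'_def using p0 c0
      by (intro divide_nonneg_nonneg) (auto simp: add_nonneg_nonneg)
    have "(\<integral>\<^sup>+w. h (th w) * ennreal (16 / sqrt s2 * th' w * exp (- (th w)\<^sup>2 / (16 * s2))) \<partial>lborel)
        = (\<integral>\<^sup>+w. ennreal (16 / sqrt s2) * ((h (th w) * ennreal (exp (- (th w)\<^sup>2 / (16 * s2)))) * ennreal (th' w)) \<partial>lborel)"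
    proof (intro nn_integral_cong)
      fix w :: real
      have "ennreal (16 / sqrt s2 * th' w * exp (- (th w)\<^sup>2 / (16 * s2)))
          = ennreal (16 / sqrt s2) * (ennreal (exp (- (th w)\<^sup>2 / (16 * s2))) * ennreal (th' w))"
        by (rule ennreal_mult3) (use th'0 s2 in auto)
      then show "h (th w) * ennreal (16 / sqrt s2 * th' w * exp (- (th w)\<^sup>2 / (16 * s2)))
          = ennreal (16 / sqrt s2) * ((h (th w) * ennreal (exp (- (th w)\<^sup>2 / (16 * s2)))) * ennreal (th' w))"
        by (simp only: mult_ac)
    qed
    also have "\<dots> = ennreal (16 / sqrt s2) * (\<integral>\<^sup>+w. (h (th w) * ennreal (exp (- (th w)\<^sup>2 / (16 * s2)))) * ennreal (th' w) \<partial>lborel)"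
      by (rule nn_integral_cmult) (unfold th_def th'_def, measurable)
    finally show ?thesis .
  qed
  also have "\<dots> \<le> ennreal (16 / sqrt s2) * (\<integral>\<^sup>+u. h u * ennreal (exp (- u\<^sup>2 / (16 * s2))) \<partial>lborel)"
  proof (intro mult_left_mono)
    show "(\<integral>\<^sup>+w. (h (th w) * ennreal (exp (- (th w)\<^sup>2 / (16 * s2)))) * ennreal (th' w) \<partial>lborel)
        \<le> (\<integral>\<^sup>+u. h u * ennreal (exp (- u\<^sup>2 / (16 * s2))) \<partial>lborel)"
      unfolding th_def th'_def by (rule subst_bound[OF _ p0 c0, where h="\<lambda>u. h u * ennreal (exp (- u\<^sup>2 / (16 * s2)))"]) measurable
  qed simp
  finally show ?thesis unfolding V_def R_def .
qed

lemma gauss_tail_finite: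
  fixes f :: "real \<Rightarrow> real" and m s2 :: real
  assumes s2: "s2 > 0" and fi: "integrable (gaussian_measure m (sqrt (8 * s2))) f"
    and fm[measurable]: "f \<in> borel_measurable borel"
  shows "(\<integral>\<^sup>+u. ennreal \<bar>f (m + u)\<bar> * ennreal (exp (- u\<^sup>2 / (16 * s2))) \<partial>lborel) < \<infinity>"
proof -
  define tau where "tau = sqrt (8 * s2)"
  have tau2: "tau\<^sup>2 = 8 * s2" unfolding tau_def using s2 by simp
  define F where "F t = ennreal \<bar>f t\<bar> * ennreal (exp (- (t - m)\<^sup>2 / (16 * s2)))" for t
  have Fm[measurable]: "F \<in> borel_measurable borel" unfolding F_def by measurable
  have "(\<integral>\<^sup>+u. ennreal \<bar>f (m + u)\<bar> * ennreal (exp (- u\<^sup>2 / (16 * s2))) \<partial>lborel) = (\<integral>\<^sup>+u. F (m + 1 * u) \<partial>lborel)"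
    unfolding F_def by simp
  also have "\<dots> = (\<integral>\<^sup>+t. F t \<partial>lborel)"
    using nn_integral_real_affine[OF Fm, of 1 m] by simp
  also have "\<dots> = (\<integral>\<^sup>+t. ennreal (sqrt (2 * pi * tau\<^sup>2)) * (ennreal (normal_density m tau t) * ennreal (norm (f t))) \<partial>lborel)"
  proof (intro nn_integral_cong)
    fix t
    have "sqrt (2 * pi * tau\<^sup>2) * normal_density m tau t = exp (- (t - m)\<^sup>2 / (16 * s2))"
      unfolding normal_density_def tau2 using s2 by (simp add: field_simps)
    then show "F t = ennreal (sqrt (2 * pi * tau\<^sup>2)) * (ennreal (normal_density m tau t) * ennreal (norm (f t)))"
      unfolding F_def by (simp add: ennreal_mult[symmetric] mult_ac)
  qed
  also have "\<dots> = ennreal (sqrt (2 * pi * tau\<^sup>2)) * (\<integral>\<^sup>+t. ennreal (normal_density m tau t) * ennreal (norm (f t)) \<partial>lborel)"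
    by (rule nn_integral_cmult) measurable
  also have "(\<integral>\<^sup>+t. ennreal (normal_density m tau t) * ennreal (norm (f t)) \<partial>lborel)
      = (\<integral>\<^sup>+t. ennreal (norm (f t)) \<partial>gaussian_measure m tau)"
    unfolding gaussian_measure_def by (subst nn_integral_density) auto
  finally have eq: "(\<integral>\<^sup>+u. ennreal \<bar>f (m + u)\<bar> * ennreal (exp (- u\<^sup>2 / (16 * s2))) \<partial>lborel)
     = ennreal (sqrt (2 * pi * tau\<^sup>2)) * (\<integral>\<^sup>+t. ennreal (norm (f t)) \<partial>gaussian_measure m tau)" .
  have fin: "(\<integral>\<^sup>+t. ennreal (norm (f t)) \<partial>gaussian_measure m tau) < \<infinity>"
    using fi unfolding tau_def integrable_iff_bounded by simp
  show ?thesis unfolding eq using fin by (simp add: ennreal_mult_less_top)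
qed

theorem lemma4p23:
  fixes f :: "real \<Rightarrow> real"
    and Lam :: "nat \<Rightarrow> 'a set"
    and x :: 'a
    and m rho :: real
  assumes f_int: "\<And>mu sd. sd > 0 \<Longrightarrow> integrable (gaussian_measure mu sd) f"
    and fin: "\<And>k. finite (Lam k)"
    and card_lim: "filterlim (\<lambda>k. card (Lam k)) at_top sequentially"
    and x_in: "\<And>k. x \<in> Lam k"
    and rho_pos: "rho > 0"
    and m_range: "- sqrt rho < m" "m < sqrt rho"
  shows "(\<forall>\<^sub>F k in sequentially. integrable (mc_measure (Lam k) m rho) (\<lambda>phi. f (phi x)))
       \<and> (\<lambda>k. \<integral>phi. f (phi x) \<partial>mc_measure (Lam k) m rho) \<in> O(\<lambda>_. 1)"
proof -
  have s2: "rho - m\<^sup>2 > 0"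
  proof -
    have "\<bar>m\<bar> < sqrt rho" using m_range by auto
    then have "\<bar>m\<bar>\<^sup>2 < (sqrt rho)\<^sup>2" by (intro power_strict_mono) auto
    then show ?thesis using rho_pos by simp
  qed
  have fm[measurable]: "f \<in> borel_measurable borel"
  proof -
    have "integrable G01 f" using f_int[of 1 0] by simp
    then have "f \<in> borel_measurable G01" by (rule borel_measurable_integrable)
    moreover have "borel_measurable G01 = (borel_measurable borel :: (real \<Rightarrow> real) set)"
      by (rule measurable_cong_sets) simp_all
    ultimately show ?thesis by simp
  qed
  define B where "B = ennreal (16 / sqrt (rho - m\<^sup>2)) *
      (\<integral>\<^sup>+u. ennreal \<bar>f (m + u)\<bar> * ennreal (exp (- u\<^sup>2 / (16 * (rho - m\<^sup>2)))) \<partial>lborel)"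
  have Bfin: "B < \<infinity>"
  proof -
    have "(\<integral>\<^sup>+u. ennreal \<bar>f (m + u)\<bar> * ennreal (exp (- u\<^sup>2 / (16 * (rho - m\<^sup>2)))) \<partial>lborel) < \<infinity>"
      by (rule gauss_tail_finite[OF s2 f_int fm]) (use s2 in simp)
    then show ?thesis unfolding B_def by (simp add: ennreal_mult_less_top)
  qed
  have ev: "eventually (\<lambda>k. card (Lam k) \<ge> 7) sequentially"
    using card_lim unfolding filterlim_at_top by auto
  have meas: "(\<lambda>phi. f (phi x)) \<in> borel_measurable (mc_measure (Lam k) m rho)" for k
  proof -
    have M: "(\<lambda>phi. f (phi x)) \<in> borel_measurable (PiM (Lam k) (\<lambda>_. borel))"
      by (intro measurable_compose[OF measurable_component_singleton[OF x_in] fm])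
    have S: "sets (mc_measure (Lam k) m rho) = sets (PiM (Lam k) (\<lambda>_. borel))"
      unfolding mc_measure_def by simp
    have E: "(borel_measurable (mc_measure (Lam k) m rho) :: (('a \<Rightarrow> real) \<Rightarrow> real) set) = borel_measurable (PiM (Lam k) (\<lambda>_. borel))"
      by (rule measurable_cong_sets[OF S refl])
    show ?thesis unfolding E by (rule M)
  qed
  have key: "(\<integral>\<^sup>+phi. ennreal (norm (f (phi x))) \<partial>mc_measure (Lam k) m rho) \<le> B"
    if c7: "card (Lam k) \<ge> 7" for k
  proof -
    define L where "L = Lam k - {x}"
    have finL: "finite L" unfolding L_def using fin by simp
    have xL: "x \<notin> L" unfolding L_def by simp
    have ins: "insert x L = Lam k" unfolding L_def using x_in by auto
    have n6: "card L \<ge> 6" unfolding L_def using c7 x_in fin by simp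
    define T where "T = (\<lambda>g. let N = real (card (Lam k)); a = (\<Sum>y\<in>Lam k. g y) / N;
                s = sqrt (\<Sum>y\<in>Lam k. (g y - a)\<^sup>2)
            in (\<lambda>y\<in>Lam k. m + sqrt (N * (rho - m\<^sup>2)) * (g y - a) / s))"
    have Tm: "T \<in> measurable (std_gauss_field (Lam k)) (PiM (Lam k) (\<lambda>_. borel))"
      unfolding T_def std_gauss_field_def Let_def by measurable
    have mceq: "mc_measure (Lam k) m rho = distr (std_gauss_field (Lam k)) (PiM (Lam k) (\<lambda>_. borel)) T"
      unfolding mc_measure_def T_def ..
    have hm: "(\<lambda>phi. ennreal (norm (f (phi x)))) \<in> borel_measurable (PiM (Lam k) (\<lambda>_. borel))"
      by (intro measurable_compose[OF measurable_component_singleton[OF x_in]]) measurable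
    note mb = main_bound[OF finL xL refl n6 s2, where h="\<lambda>u. ennreal \<bar>f (m + u)\<bar>", unfolded ins]
    have "(\<integral>\<^sup>+phi. ennreal (norm (f (phi x))) \<partial>mc_measure (Lam k) m rho)
        = (\<integral>\<^sup>+g. ennreal (norm (f (T g x))) \<partial>std_gauss_field (Lam k))"
      unfolding mceq by (rule nn_integral_distr[OF Tm]) (use hm in simp)
    also have "\<dots> = (\<integral>\<^sup>+g. ennreal \<bar>f (m + sqrt (real (card (Lam k)) * (rho - m\<^sup>2)) *
            (g x - (\<Sum>y\<in>Lam k. g y) / real (card (Lam k))) /
            sqrt (\<Sum>y\<in>Lam k. (g y - (\<Sum>y\<in>Lam k. g y) / real (card (Lam k)))\<^sup>2))\<bar>
          \<partial>PiM (Lam k) (\<lambda>_. G01))"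
      unfolding std_gauss_field_def T_def Let_def using x_in by simp
    also have "\<dots> \<le> B" unfolding B_def by (rule mb) measurable
    finally show ?thesis .
  qed
  have evint: "\<forall>\<^sub>F k in sequentially. integrable (mc_measure (Lam k) m rho) (\<lambda>phi. f (phi x))"
    using ev
  proof (rule eventually_mono)
    fix k assume "card (Lam k) \<ge> 7"
    then have "(\<integral>\<^sup>+phi. ennreal (norm (f (phi x))) \<partial>mc_measure (Lam k) m rho) < \<infinity>"
      using key Bfin by (meson le_less_trans)
    then show "integrable (mc_measure (Lam k) m rho) (\<lambda>phi. f (phi x))"
      by (intro integrableI_bounded meas)
  qed
  have "(\<lambda>k. \<integral>phi. f (phi x) \<partial>mc_measure (Lam k) m rho) \<in> O(\<lambda>_. 1)"
  proof (rule bigoI[where c = "enn2real B"])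
    show "\<forall>\<^sub>F k in at_top. norm (\<integral>phi. f (phi x) \<partial>mc_measure (Lam k) m rho) \<le> enn2real B * norm (1::real)"
      using ev evint
    proof (rule eventually_elim2)
      fix k assume c7: "card (Lam k) \<ge> 7" and I: "integrable (mc_measure (Lam k) m rho) (\<lambda>phi. f (phi x))"
      have "ennreal (norm (\<integral>phi. f (phi x) \<partial>mc_measure (Lam k) m rho))
          \<le> (\<integral>\<^sup>+phi. ennreal (norm (f (phi x))) \<partial>mc_measure (Lam k) m rho)"
        by (rule integral_norm_bound_ennreal[OF I])
      also have "\<dots> \<le> B" by (rule key[OF c7])
      finally have "enn2real (ennreal (norm (\<integral>phi. f (phi x) \<partial>mc_measure (Lam k) m rho))) \<le> enn2real B"
        using Bfin by (intro enn2real_mono) auto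
      then show "norm (\<integral>phi. f (phi x) \<partial>mc_measure (Lam k) m rho) \<le> enn2real B * norm (1::real)"
        by simp
    qed
  qed
  with evint show ?thesis by simp
qed

end
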